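(* Let $\boldsymbol X$ be an $n\times d$ data matrix (rows $\boldsymbol x_1,\ldots,\boldsymbol x_n\in\mathbb R^d$), and let $\hat{\boldsymbol\mu}$ be a location estimator, i.e. a map assigning to every $n\times d$ data matrix a vector in $\mathbb R^d$, satisfying the following property: whenever all rows of a data matrix lie in a lower-dimensional affine subspace of $\mathbb R^d$, the estimate $\hat{\boldsymbol\mu}$ of that data matrix lies in that subspace as well. Then the finite-sample cellwise breakdown value satisfies $$\varepsilon^*_n(\hat{\boldsymbol\mu},\boldsymbol X)\leqslant \left\lceil \frac{n}{d}\right\rceil\Big/ n .$$
   Context: For an integer $m\ge 0$, $\boldsymbol X^m$ denotes any corrupted data matrix obtained from $\boldsymbol X$ by replacing at most $m$ cells (entries) in each column of $\boldsymbol X$ by arbitrary real values. The finite-sample cellwise breakdown value of $\hat{\boldsymbol\mu}$ at $\boldsymbol X$ is $$\varepsilon^*_n(\hat{\boldsymbol\mu},\boldsymbol X)=\min\Big\{\tfrac{m}{n}:\ \sup_{\boldsymbol X^m}\|\hat{\boldsymbol\mu}(\boldsymbol X^m)-\hat{\boldsymbol\mu}(\boldsymbol X)\|=\infty\Big\},$$ the supremum being over all such corrupted matrices $\boldsymbol X^m$. *)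

theory Defs
  imports "HOL-Analysis.Analysis"
begin

text \<open>A data matrix with n rows and d columns is an element of real^'d^'n:
  row i is X$i (a vector in R^d), cell (i,j) is X$i$j; n = CARD('n), d = CARD('d).\<close>

definition cellwise_corruptions :: "nat \<Rightarrow> real^'d^'n \<Rightarrow> (real^'d^'n) set" where
  "cellwise_corruptions m X = {Y. \<forall>j. card {i. Y$i$j \<noteq> X$i$j} \<le> m}"

definition cellwise_breakdown :: "(real^'d^'n \<Rightarrow> real^'d) \<Rightarrow> real^'d^'n \<Rightarrow> real" where
  "cellwise_breakdown mu X =
     Inf {real m / real CARD('n) | m.
            (SUP Y\<in>cellwise_corruptions m X. ereal (norm (mu Y - mu X))) = \<infinity>}"

end

theory Submission
  imports Defs
begin

lemma grouping:
  fixes m :: nat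
  assumes m: "CARD('n::finite) \<le> CARD('d::finite) * m"
  shows "\<exists>grp :: 'n \<Rightarrow> 'd. \<forall>k. card {i. grp i = k} \<le> m"
proof -
  obtain g :: "nat \<Rightarrow> 'd" where g: "bij_betw g {0..<CARD('d)} UNIV"
    using ex_bij_betw_nat_finite[of "UNIV :: 'd set"] by auto
  obtain f :: "nat \<Rightarrow> 'n" where f: "bij_betw f {0..<CARD('n)} UNIV"
    using ex_bij_betw_nat_finite[of "UNIV :: 'n set"] by auto
  define idx where "idx = the_inv_into {0..<CARD('n)} f"
  have idx_lt: "idx i < CARD('n)" for i
    using bij_betw_apply[OF bij_betw_the_inv_into[OF f], of i] unfolding idx_def by simp
  have f_idx: "f (idx i) = i" for i
    using f unfolding idx_def bij_betw_def by (simp add: f_the_inv_into_f)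
  have mpos: "m > 0" using m by (cases m) auto
  define grp where "grp i = g (idx i div m)" for i
  have "card {i. grp i = k} \<le> m" for k
  proof -
    obtain a where a: "a < CARD('d)" "g a = k"
      using g unfolding bij_betw_def by (metis UNIV_I atLeastLessThan_iff imageE)
    have "{i. grp i = k} \<subseteq> f ` {a*m..<a*m+m}"
    proof
      fix i assume "i \<in> {i. grp i = k}"
      hence "g (idx i div m) = g a" using a by (simp add: grp_def)
      moreover have "idx i div m < CARD('d)"
        using idx_lt[of i] m mpos by (simp add: div_less_iff_less_mult less_le_trans)
      ultimately have "idx i div m = a" using g a(1) unfolding bij_betw_def inj_on_def by auto
      hence "idx i \<in> {a*m..<a*m+m}"
        using mpos by (metis atLeastLessThan_iff div_times_less_eq_dividend mult.commute
            add.commute dividend_less_div_times)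
      thus "i \<in> f ` {a*m..<a*m+m}" using f_idx[of i] by (metis image_eqI)
    qed
    hence "card {i. grp i = k} \<le> card (f ` {a*m..<a*m+m})"
      by (intro card_mono) auto
    also have "\<dots> \<le> m" using card_image_le[of "{a*m..<a*m+m}" f] by simp
    finally show ?thesis .
  qed
  thus ?thesis by blast
qed

theorem proposition1:
  fixes mu :: "real^'d^'n \<Rightarrow> real^'d" and X :: "real^'d^'n"
  assumes "\<forall>Z S. affine S \<and> aff_dim S < int CARD('d) \<and> (\<forall>i. Z$i \<in> S) \<longrightarrow> mu Z \<in> S"
  shows "cellwise_breakdown mu X \<le> real_of_int \<lceil>real CARD('n) / real CARD('d)\<rceil> / real CARD('n)"
proof -
  define c where "c = \<lceil>real CARD('n) / real CARD('d)\<rceil>"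
  define m where "m = nat c"
  have c0: "c \<ge> 0" unfolding c_def by (simp add: order_less_le_trans[OF _ divide_nonneg_nonneg])
  have rm: "real m = real_of_int c" using c0 unfolding m_def by simp
  have "real CARD('n) / real CARD('d) \<le> real m" using rm unfolding c_def by simp
  hence "real CARD('n) \<le> real CARD('d) * real m" by (simp add: field_simps)
  hence "CARD('n) \<le> CARD('d) * m" by (metis of_nat_le_iff of_nat_mult)
  then obtain grp :: "'n \<Rightarrow> 'd" where grp: "\<And>k. card {i. grp i = k} \<le> m"
    using grouping by blast
  define Y where "Y t = (\<chi> i j. if grp i = j then t - (\<Sum>k\<in>UNIV-{j}. X$i$k) else X$i$j)" for t
  have Ycorr: "Y t \<in> cellwise_corruptions m X" for t
    unfolding cellwise_corruptions_def
  proof (intro CollectI allI)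
    fix j
    have "{i. Y t$i$j \<noteq> X$i$j} \<subseteq> {i. grp i = j}" unfolding Y_def by auto
    hence "card {i. Y t$i$j \<noteq> X$i$j} \<le> card {i. grp i = j}" by (intro card_mono) auto
    thus "card {i. Y t$i$j \<noteq> X$i$j} \<le> m" using grp[of j] by linarith
  qed
  define a :: "real^'d" where "a = (\<chi> j. 1)"
  have a0: "a \<noteq> 0" unfolding a_def by (metis vec_eq_iff zero_index zero_neq_one vec_lambda_beta)
  have ainner: "a \<bullet> y = (\<Sum>j\<in>UNIV. y$j)" for y unfolding a_def inner_vec_def by simp
  have rowsum: "(\<Sum>j\<in>UNIV. Y t$i$j) = t" for t i
  proof -
    have "(\<Sum>j\<in>UNIV. Y t$i$j) = Y t$i$(grp i) + (\<Sum>j\<in>UNIV-{grp i}. Y t$i$j)"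
      by (metis UNIV_I finite sum.remove)
    also have "(\<Sum>j\<in>UNIV-{grp i}. Y t$i$j) = (\<Sum>j\<in>UNIV-{grp i}. X$i$j)"
      by (rule sum.cong) (auto simp: Y_def)
    finally show ?thesis by (simp add: Y_def)
  qed
  have muY: "(\<Sum>j\<in>UNIV. mu (Y t)$j) = t" for t
  proof -
    let ?S = "{x::real^'d. a \<bullet> x = t}"
    have "affine ?S" by (simp add: affine_hyperplane)
    moreover have "aff_dim ?S < int CARD('d)" using a0 by simp
    moreover have "\<forall>i. Y t$i \<in> ?S" using rowsum ainner by simp
    ultimately have "mu (Y t) \<in> ?S" using assms by blast
    thus ?thesis using ainner by simp
  qed
  have nb: "\<bar>t\<bar> \<le> real CARD('d) * norm (mu (Y t))" for t
  proof -
    have "\<bar>t\<bar> \<le> (\<Sum>j\<in>UNIV. \<bar>mu (Y t)$j\<bar>)" using muY[of t] sum_abs by metis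
    also have "\<dots> \<le> (\<Sum>j\<in>(UNIV::'d set). norm (mu (Y t)))"
      by (intro sum_mono component_le_norm_cart)
    finally show ?thesis by simp
  qed
  have inf: "(SUP Y\<in>cellwise_corruptions m X. ereal (norm (mu Y - mu X))) = \<infinity>"
  proof (rule SUP_PInfty)
    fix N :: nat
    define t where "t = real CARD('d) * (real N + norm (mu X))"
    have "\<bar>t\<bar> \<le> real CARD('d) * norm (mu (Y t))" by (rule nb)
    moreover have "\<bar>t\<bar> = real CARD('d) * (real N + norm (mu X))" unfolding t_def by simp
    ultimately have "real N + norm (mu X) \<le> norm (mu (Y t))" by simp
    moreover have "norm (mu (Y t)) \<le> norm (mu (Y t) - mu X) + norm (mu X)"
      using norm_triangle_ineq[of "mu (Y t) - mu X" "mu X"] by simp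
    ultimately have "real N \<le> norm (mu (Y t) - mu X)" by linarith
    thus "\<exists>i\<in>cellwise_corruptions m X. ereal (real N) \<le> ereal (norm (mu i - mu X))"
      using Ycorr[of t] by auto
  qed
  have mem: "real m / real CARD('n) \<in> {real m / real CARD('n) | m.
            (SUP Y\<in>cellwise_corruptions m X. ereal (norm (mu Y - mu X))) = \<infinity>}"
    using inf by blast
  have bdd: "bdd_below {real m / real CARD('n) | m.
            (SUP Y\<in>cellwise_corruptions m X. ereal (norm (mu Y - mu X))) = \<infinity>}"
    by (rule bdd_belowI[of _ 0]) auto
  have "cellwise_breakdown mu X \<le> real m / real CARD('n)"
    unfolding cellwise_breakdown_def using cInf_lower[OF mem bdd] .
  thus ?thesis using rm unfolding c_def by simp
qed

end
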